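(* Consider the influence-based model $X(t+1)=f_{\mathrm{IbM}}(X(t))$, $f_{\mathrm{IbM}}(X)=\operatorname{diag}(|X|\mathbf{1}_n)^{-1}XX$. Let $Q_{\mathrm{IbM}}$ be the set of matrices $PYP^{\top}\in\mathcal{S}^{+}_{\mathrm{rs\text{-}symm}}$ with $P$ a permutation matrix and $Y$ block diagonal with each diagonal block of the form $\operatorname{sign}(w)w^{\top}$, $w\in\mathbb{R}^m$, $|w|\succ\mathbf{0}_m$, $m\le n$. Then: (i) each element of $Q_{\mathrm{IbM}}$ of rank one is a locally stable fixed point of $f_{\mathrm{IbM}}$; (ii) for every $X(0)\in\mathcal{S}^{+}_{\mathrm{rs\text{-}symm}}$, the following are equivalent: (a) the solution $X(t)$ satisfies the non-vanishing appraisal condition $\liminf_{t\to\infty}\min_{i,j}|X_{ij}(t)|>0$; (b) there exists $t_0\ge0$ such that $G(X(t))$ satisfies social balance for all $t\ge t_0$; (c) there exists $X^*\in Q_{\mathrm{IbM}}$ of rank one such that $\lim_{t\to\infty}X(t)=X^*$.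
   Context: $|X|$ is entry-wise absolute value, $\mathbf{1}_n$ the all-ones vector, $\operatorname{sign}$ entry-wise sign, $\succ$ entry-wise strict inequality. $\mathcal{S}^{+}_{\mathrm{rs\text{-}symm}}=\{X\in\mathbb{R}^{n\times n}:\operatorname{sign}(X)=\operatorname{sign}(X)^{\top},\ X_{ii}>0\ \forall i,\ \exists\gamma\succ\mathbf{0}_n\text{ with }\operatorname{diag}(\gamma)X=(\operatorname{diag}(\gamma)X)^{\top}\}$. A fixed point $X^*$ of a map $f$ is locally stable if for every $\epsilon>0$ there is $\delta>0$ such that $\max_{i,j}|X_{ij}(0)-X^*_{ij}|<\delta$ implies $\max_{i,j}|X_{ij}(t)-X^*_{ij}|<\epsilon$ for all $t\ge0$, where $X(t+1)=f(X(t))$. $G(X)$ is the weighted digraph with adjacency matrix $X$; it satisfies social balance if $X_{ii}>0$ for all $i$ and $\operatorname{sign}(X_{ij})\operatorname{sign}(X_{jk})\operatorname{sign}(X_{ki})=1$ for all $i,j,k$. *)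

theory Defs
  imports "HOL-Analysis.Analysis"
begin

text \<open>n x n real matrices are rendered as real^'n^'n with 'n a finite type of agents;
a linear order on 'n is only used to say what "block diagonal" (consecutive blocks) means.\<close>

definition f_IbM :: "real^'n^'n \<Rightarrow> real^'n^'n" where
  "f_IbM X = (\<chi> i j. (\<Sum>k\<in>UNIV. X$i$k * X$k$j) / (\<Sum>k\<in>UNIV. \<bar>X$i$k\<bar>))"

definition traj :: "real^'n^'n \<Rightarrow> nat \<Rightarrow> real^'n^'n" where
  "traj X0 t = (f_IbM ^^ t) X0"

definition S_rs_symm :: "(real^'n^'n) set" where
  "S_rs_symm = {X. (\<forall>i j. sgn (X$i$j) = sgn (X$j$i)) \<and> (\<forall>i. X$i$i > 0) \<and>
     (\<exists>\<gamma>::real^'n. (\<forall>i. \<gamma>$i > 0) \<and> (\<forall>i j. \<gamma>$i * X$i$j = \<gamma>$j * X$j$i))}"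

definition permutation_matrix :: "real^'n^'n \<Rightarrow> bool" where
  "permutation_matrix P \<longleftrightarrow> (\<exists>p. p permutes (UNIV::'n set) \<and>
      P = (\<chi> i j. if i = p j then 1 else 0))"

text \<open>Y is block diagonal (consecutive blocks w.r.t. the order of 'n, block index b),
  each diagonal block being sign(w) w^T with all entries of w nonzero.\<close>
definition sign_block_diag :: "real^('n::{finite,linorder})^('n::{finite,linorder}) \<Rightarrow> bool" where
  "sign_block_diag Y \<longleftrightarrow> (\<exists>(b::'n::{finite,linorder} \<Rightarrow> nat) (w::real^('n::{finite,linorder})). mono b \<and> (\<forall>i. w$i \<noteq> 0) \<and>
      (\<forall>i j. Y$i$j = (if b i = b j then sgn (w$i) * (w$j) else 0)))"

definition Q_IbM :: "(real^('n::{finite,linorder})^('n::{finite,linorder})) set" where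
  "Q_IbM = {X. X \<in> S_rs_symm \<and>
     (\<exists>P Y. permutation_matrix P \<and> sign_block_diag Y \<and> X = P ** Y ** transpose P)}"

definition fixed_point :: "('a \<Rightarrow> 'a) \<Rightarrow> 'a \<Rightarrow> bool" where
  "fixed_point f x \<longleftrightarrow> f x = x"

definition locally_stable :: "(real^'n^'n \<Rightarrow> real^'n^'n) \<Rightarrow> real^'n^'n \<Rightarrow> bool" where
  "locally_stable f Xs \<longleftrightarrow> (\<forall>\<epsilon>>0. \<exists>\<delta>>0. \<forall>X0.
     (\<forall>i j. \<bar>X0$i$j - Xs$i$j\<bar> < \<delta>) \<longrightarrow>
     (\<forall>t. \<forall>i j. \<bar>((f ^^ t) X0)$i$j - Xs$i$j\<bar> < \<epsilon>))"

definition social_balance :: "real^'n^'n \<Rightarrow> bool" where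
  "social_balance X \<longleftrightarrow> (\<forall>i. X$i$i > 0) \<and>
     (\<forall>i j k. sgn (X$i$j) * sgn (X$j$k) * sgn (X$k$i) = 1)"

definition min_abs_entry :: "real^'n^'n \<Rightarrow> real" where
  "min_abs_entry X = Min {\<bar>X$i$j\<bar> | i j. True}"

end

theory Submission
  imports Defs
begin


definition rs :: "real^'n^'n \<Rightarrow> 'n \<Rightarrow> real" where
  "rs X i = (\<Sum>k\<in>UNIV. \<bar>X$i$k\<bar>)"

lemma f_nth: "f_IbM X $ i $ j = (\<Sum>k\<in>UNIV. X$i$k * X$k$j) / rs X i"
  by (simp add: f_IbM_def rs_def)

lemma traj_Suc: "traj X0 (Suc t) = f_IbM (traj X0 t)"
  by (simp add: traj_def)

lemma traj_add: "traj X0 (t + k) = (f_IbM ^^ k) (traj X0 t)"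
  by (simp add: traj_def funpow_add add.commute)

lemma rs_ge: "\<bar>X$i$k\<bar> \<le> rs X i"
  unfolding rs_def by (rule member_le_sum) auto

definition sconj :: "('n \<Rightarrow> real) \<Rightarrow> real^'n^'n \<Rightarrow> real^'n^'n" where
  "sconj s X = (\<chi> i j. s i * s j * X$i$j)"

lemma sconj_nth[simp]: "sconj s X $ i $ j = s i * s j * X$i$j"
  by (simp add: sconj_def)

lemma sq_one: "\<bar>s\<bar> = (1::real) \<Longrightarrow> s * s = 1"
  by (metis abs_mult_self_eq mult.right_neutral)

lemma sconj_sconj: assumes "\<forall>i. \<bar>s i\<bar> = 1" shows "sconj s (sconj s X) = X"
proof -
  have "s i * s j * (s i * s j * X$i$j) = X$i$j" for i j
    using sq_one[of "s i"] sq_one[of "s j"] assms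
    by (metis (no_types, lifting) mult.assoc mult.left_commute mult_1)
  then show ?thesis by (simp add: vec_eq_iff)
qed

lemma rs_sconj: assumes "\<forall>i. \<bar>s i\<bar> = 1" shows "rs (sconj s X) i = rs X i"
  using assms by (simp add: rs_def abs_mult)

lemma f_sconj: assumes "\<forall>i. \<bar>s i\<bar> = 1" shows "f_IbM (sconj s X) = sconj s (f_IbM X)"
proof -
  have "(\<Sum>k\<in>UNIV. (s i * s k * X$i$k) * (s k * s j * X$k$j)) = s i * s j * (\<Sum>k\<in>UNIV. X$i$k * X$k$j)" for i j
  proof -
    have kk: "(s i * s k * X$i$k) * (s k * s j * X$k$j) = s i * s j * (X$i$k * X$k$j)" for k
    proof -
      have "s k * s k = 1" using sq_one[of "s k"] assms by auto
      have "(s i * s k * X$i$k) * (s k * s j * X$k$j) = s i * s j * (X$i$k * X$k$j) * (s k * s k)"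
        by (simp add: algebra_simps)
      then show ?thesis using \<open>s k * s k = 1\<close> by simp
    qed
    show ?thesis by (subst sum.cong[OF refl kk]) (simp add: sum_distrib_left)
  qed
  then show ?thesis using assms
    by (simp add: vec_eq_iff f_nth rs_sconj)
qed

lemma funpow_sconj: assumes "\<forall>i. \<bar>s i\<bar> = 1" shows "(f_IbM ^^ t) (sconj s X) = sconj s ((f_IbM ^^ t) X)"
  by (induction t) (simp_all add: f_sconj[OF assms])

lemma avg_upper:
  fixes w x :: "'a \<Rightarrow> real"
  assumes "finite A" "\<forall>l\<in>A. 0 \<le> w l" "sum w A = 1" "\<forall>l\<in>A. x l \<le> h" "i \<in> A"
    "x i \<le> h - \<eta>" "e \<le> w i" "0 \<le> \<eta>"
  shows "(\<Sum>l\<in>A. w l * x l) \<le> h - e*\<eta>"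
proof -
  have eq: "(\<Sum>l\<in>A. w l * x l) = h + (\<Sum>l\<in>A. w l * (x l - h))"
    using assms(3) by (simp add: right_diff_distrib sum_subtractf sum_distrib_right[symmetric])
  have "(\<Sum>l\<in>A. w l * (x l - h)) = w i * (x i - h) + (\<Sum>l\<in>A-{i}. w l * (x l - h))"
    using assms(1,5) by (simp add: sum.remove)
  also have "(\<Sum>l\<in>A-{i}. w l * (x l - h)) \<le> 0"
    using assms(2,4) by (intro sum_nonpos) (simp add: mult_nonneg_nonpos)
  also have "w i * (x i - h) \<le> w i * (- \<eta>)"
    using assms by (intro mult_left_mono) auto
  also have "w i * (- \<eta>) \<le> e * (-\<eta>)"
    using assms by (intro mult_right_mono_neg) auto
  finally show ?thesis using eq by simp
qed

lemma avg_lower: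
  fixes w x :: "'a \<Rightarrow> real"
  assumes "finite A" "\<forall>l\<in>A. 0 \<le> w l" "sum w A = 1" "\<forall>l\<in>A. h \<le> x l" "i \<in> A"
    "h + \<eta> \<le> x i" "e \<le> w i" "0 \<le> \<eta>"
  shows "h + e*\<eta> \<le> (\<Sum>l\<in>A. w l * x l)"
proof -
  have "(\<Sum>l\<in>A. w l * (- x l)) \<le> (-h) - e*\<eta>"
    by (rule avg_upper[OF assms(1-3) _ assms(5)]) (use assms in auto)
  then show ?thesis by (simp add: sum_negf)
qed

definition pos :: "real^'n^'n \<Rightarrow> bool" where "pos Y \<longleftrightarrow> (\<forall>a b. Y$a$b > 0)"

definition cmin :: "real^'n^'n \<Rightarrow> 'n \<Rightarrow> real" where "cmin Y j = Min (range (\<lambda>k. Y$k$j))"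
definition cmax :: "real^'n^'n \<Rightarrow> 'n \<Rightarrow> real" where "cmax Y j = Max (range (\<lambda>k. Y$k$j))"

lemma cmin_le: "cmin Y j \<le> Y$k$j"
  unfolding cmin_def by (rule Min_le) auto
lemma cmax_ge: "Y$k$j \<le> cmax Y j"
  unfolding cmax_def by (rule Max_ge) auto
lemma cmin_ex: "\<exists>k. Y$k$j = cmin Y j"
proof -
  have "cmin Y j \<in> range (\<lambda>k. Y$k$j)" unfolding cmin_def by (rule Min_in) auto
  then show ?thesis by auto
qed
lemma cmax_ex: "\<exists>k. Y$k$j = cmax Y j"
proof -
  have "cmax Y j \<in> range (\<lambda>k. Y$k$j)" unfolding cmax_def by (rule Max_in) auto
  then show ?thesis by auto
qed
lemma cmin_geI: "(\<And>k. a \<le> Y$k$j) \<Longrightarrow> a \<le> cmin Y j"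
  using cmin_ex by metis
lemma cmax_leI: "(\<And>k. Y$k$j \<le> a) \<Longrightarrow> cmax Y j \<le> a"
  using cmax_ex by metis

lemma cmin_le_cmax: "cmin Y j \<le> cmax Y j"
  using cmin_le[of Y j j] cmax_ge[of Y j j] by linarith

lemma rs_pos_eq: "pos Y \<Longrightarrow> rs Y i = (\<Sum>k\<in>UNIV. Y$i$k)"
  unfolding rs_def pos_def by (intro sum.cong) (auto simp: less_imp_le)

lemma rs_pos: "pos Y \<Longrightarrow> rs Y i > 0"
  using rs_ge[of Y i i] unfolding pos_def by (metis abs_of_pos le_less_trans less_le_not_le not_le)

lemma wsum_pos: "pos Y \<Longrightarrow> (\<Sum>k\<in>UNIV. Y$i$k / rs Y i) = 1"
  using rs_pos[of Y i] by (simp add: sum_divide_distrib[symmetric] rs_pos_eq)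

lemma f_pos_avg: "pos Y \<Longrightarrow> f_IbM Y $ i $ j = (\<Sum>k\<in>UNIV. (Y$i$k / rs Y i) * Y$k$j)"
  by (simp add: f_nth sum_divide_distrib)

lemma f_pos: assumes "pos Y" shows "pos (f_IbM Y)"
  unfolding pos_def
proof (intro allI)
  fix a b
  show "f_IbM Y $ a $ b > 0"
    unfolding f_pos_avg[OF assms]
    using assms rs_pos[OF assms, of a] unfolding pos_def
    by (intro sum_pos) auto
qed

lemma f_col_bounds:
  assumes "pos Y" "\<forall>k. lo \<le> Y$k$j \<and> Y$k$j \<le> hi"
  shows "lo \<le> f_IbM Y $i$j \<and> f_IbM Y $i$j \<le> hi"
proof -
  have w: "\<forall>l\<in>UNIV. 0 \<le> Y$i$l / rs Y i" using assms(1) rs_pos[OF assms(1), of i]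
    unfolding pos_def by (auto simp: less_imp_le)
  have "(\<Sum>k\<in>UNIV. (Y$i$k / rs Y i) * Y$k$j) \<le> hi - 0 * 0"
    by (rule avg_upper[OF _ w wsum_pos[OF assms(1)], where i=j and e=0 and \<eta>=0]) (use assms(2) w in auto)
  moreover have "lo + 0 * 0 \<le> (\<Sum>k\<in>UNIV. (Y$i$k / rs Y i) * Y$k$j)"
    by (rule avg_lower[OF _ w wsum_pos[OF assms(1)], where i=j and e=0 and \<eta>=0]) (use assms(2) w in auto)
  ultimately show ?thesis by (simp add: f_pos_avg[OF assms(1)])
qed

lemma iter_pos: "pos Y \<Longrightarrow> pos ((f_IbM ^^ t) Y)"
  by (induction t) (auto intro: f_pos)

lemma iter_bounds:
  assumes "pos Y" "\<forall>k. lo \<le> Y$k$j \<and> Y$k$j \<le> hi"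
  shows "lo \<le> (f_IbM ^^ t) Y $k$j \<and> (f_IbM ^^ t) Y $k$j \<le> hi"
proof (induction t arbitrary: k)
  case 0 then show ?case using assms by simp
next
  case (Suc t)
  then show ?case using f_col_bounds[OF iter_pos[OF assms(1)], of lo t j hi k] by simp
qed

lemma contract:
  assumes "pos Y" "\<forall>i k. e \<le> Y$i$k / rs Y i"
  shows "cmax (f_IbM Y) j \<le> cmax Y j - e * (cmax Y j - cmin Y j)"
    and "cmin Y j \<le> cmin (f_IbM Y) j"
proof -
  have w: "\<forall>l\<in>UNIV. 0 \<le> Y$i$l / rs Y i" for i using assms(1) rs_pos[OF assms(1), of i]
    unfolding pos_def by (auto simp: less_imp_le)
  obtain k0 where k0: "Y$k0$j = cmin Y j" using cmin_ex by metis
  show "cmax (f_IbM Y) j \<le> cmax Y j - e * (cmax Y j - cmin Y j)"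
  proof (rule cmax_leI)
    fix i
    have "(\<Sum>k\<in>UNIV. (Y$i$k / rs Y i) * Y$k$j) \<le> cmax Y j - e * (cmax Y j - cmin Y j)"
      by (rule avg_upper[OF _ w wsum_pos[OF assms(1)], of _ _ k0])
        (use assms(2) k0 in \<open>auto simp: cmax_ge cmin_le cmin_le_cmax\<close>)
    then show "f_IbM Y $ i $ j \<le> cmax Y j - e * (cmax Y j - cmin Y j)"
      by (simp add: f_pos_avg[OF assms(1)])
  qed
  show "cmin Y j \<le> cmin (f_IbM Y) j"
    using f_col_bounds[OF assms(1), of "cmin Y j" j "cmax Y j"] cmin_le cmax_ge
    by (metis cmin_geI)
qed

lemma pos_conv:
  assumes Y0: "pos Y0"
  shows "\<exists>c. (\<forall>j. 0 < c j \<and> cmin Y0 j \<le> c j \<and> c j \<le> cmax Y0 j) \<and>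
             (\<lambda>t. (f_IbM ^^ t) Y0) \<longlonglongrightarrow> (\<chi> i j. c j)"
proof -
  define Ys where "Ys t = (f_IbM ^^ t) Y0" for t
  have Ypos: "pos (Ys t)" for t unfolding Ys_def by (rule iter_pos[OF Y0])
  have bnd: "cmin Y0 j \<le> Ys t $k$j \<and> Ys t $k$j \<le> cmax Y0 j" for t k j
    unfolding Ys_def by (rule iter_bounds[OF Y0]) (auto simp: cmin_le cmax_ge)
  have cminpos: "0 < cmin Y0 j" for j
    using cmin_ex[of Y0 j] Y0 unfolding pos_def by metis
  define m0 where "m0 = Min (range (cmin Y0))"
  have m0pos: "0 < m0" unfolding m0_def using cminpos by (subst Min_gr_iff) auto
  have m0le: "m0 \<le> cmin Y0 j" for j unfolding m0_def by (rule Min_le) auto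
  define B where "B = (\<Sum>j\<in>UNIV. cmax Y0 j)"
  have rsB: "rs (Ys t) i \<le> B" for t i
    unfolding rs_pos_eq[OF Ypos] B_def by (intro sum_mono) (use bnd in auto)
  define e where "e = m0 / B"
  have wB: "e \<le> Ys t $i$k / rs (Ys t) i" for t i k
    unfolding e_def
  proof (rule frac_le)
    show "0 \<le> Ys t $ i $ k" using Ypos unfolding pos_def by (simp add: less_imp_le)
    show "m0 \<le> Ys t $ i $ k" using bnd[where t=t and k=i and j=k] m0le[of k] by linarith
    show "0 < rs (Ys t) i" by (rule rs_pos[OF Ypos])
  qed (rule rsB)
  have wB': "\<forall>i k. e \<le> Ys t $i$k / rs (Ys t) i" for t using wB by blast
  have epos: "0 < e"
  proof -
    have "0 < rs (Ys 0) i" for i by (rule rs_pos[OF Ypos])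
    then have "0 < B" using rsB by (meson less_le_trans)
    then show ?thesis unfolding e_def using m0pos by simp
  qed
  have ele1: "e \<le> 1"
  proof -
    have "Ys 0 $ i $ i / rs (Ys 0) i \<le> 1" for i
      using rs_ge[of "Ys 0" i i] rs_pos[OF Ypos, of 0 i] Ypos unfolding pos_def by simp
    then show ?thesis using wB[of 0] by (meson order_trans)
  qed
  have Ysuc: "Ys (Suc t) = f_IbM (Ys t)" for t unfolding Ys_def by simp
  define c where "c j = (SUP t. cmin (Ys t) j)" for j
  have main: "(\<lambda>t. Ys t $ k $ j) \<longlonglongrightarrow> c j \<and> 0 < c j \<and> cmin Y0 j \<le> c j \<and> c j \<le> cmax Y0 j" for k j
  proof -
    define lo where "lo t = cmin (Ys t) j" for t
    define R where "R t = cmax (Ys t) j - cmin (Ys t) j" for t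
    have inc: "incseq lo"
      by (rule incseq_SucI) (use contract(2)[OF Ypos wB'] in \<open>simp add: lo_def Ysuc\<close>)
    have loB: "lo t \<le> cmax Y0 j" for t using bnd[where t=t and k=j and j=j] cmin_le[of "Ys t" j j] unfolding lo_def by linarith
    have bdd: "bdd_above (range lo)" using loB by (intro bdd_aboveI[where M="cmax Y0 j"]) auto
    have lolim: "lo \<longlonglongrightarrow> c j" unfolding c_def lo_def[symmetric] by (rule LIMSEQ_incseq_SUP[OF bdd inc])
    have Rnn: "0 \<le> R t" for t unfolding R_def using cmin_le_cmax[of "Ys t" j] by simp
    have Rstep: "R (Suc t) \<le> (1 - e) * R t" for t
      using contract(1)[OF Ypos[of t] wB'[of t], of j] contract(2)[OF Ypos[of t] wB'[of t], of j]
      unfolding R_def Ysuc by (simp add: algebra_simps)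
    have Rpow: "R t \<le> (1 - e)^t * R 0" for t
    proof (induction t)
      case (Suc t)
      have "R (Suc t) \<le> (1 - e) * R t" by (rule Rstep)
      also have "\<dots> \<le> (1 - e) * ((1 - e)^t * R 0)" using Suc ele1 by (intro mult_left_mono) auto
      finally show ?case by (simp add: mult.assoc)
    qed simp
    have "(\<lambda>t. (1 - e)^t) \<longlonglongrightarrow> 0" using epos ele1 by (intro LIMSEQ_power_zero) auto
    then have "(\<lambda>t. (1 - e)^t * R 0) \<longlonglongrightarrow> 0" by (rule tendsto_mult_left_zero)
    then have Rlim: "R \<longlonglongrightarrow> 0" using Rnn Rpow by (intro tendsto_sandwich[of "\<lambda>_. 0" R sequentially _ 0]) auto
    have up: "(\<lambda>t. lo t + R t) \<longlonglongrightarrow> c j" using tendsto_add[OF lolim Rlim] by simp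
    have "(\<lambda>t. Ys t $ k $ j) \<longlonglongrightarrow> c j"
    proof (rule tendsto_sandwich[OF _ _ lolim up])
      show "\<forall>\<^sub>F t in sequentially. lo t \<le> Ys t $ k $ j" unfolding lo_def by (simp add: cmin_le)
      show "\<forall>\<^sub>F t in sequentially. Ys t $ k $ j \<le> lo t + R t" unfolding lo_def R_def by (simp add: cmax_ge)
    qed
    moreover have "lo 0 \<le> c j" by (rule incseq_le[OF inc lolim])
    moreover have "c j \<le> cmax Y0 j" by (rule LIMSEQ_le_const2[OF lolim]) (use loB in auto)
    moreover have "lo 0 = cmin Y0 j" unfolding lo_def Ys_def by simp
    ultimately show ?thesis using cminpos[of j] by auto
  qed
  have "Ys \<longlonglongrightarrow> (\<chi> i j. c j)"
    by (intro vec_tendstoI) (use main in simp)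
  then show ?thesis using main unfolding Ys_def by blast
qed

lemma sgn_tri: "sgn (p::real) * sgn q * sgn r = 1 \<Longrightarrow> sgn q = sgn p * sgn r"
  by (auto simp: sgn_real_def split: if_splits)
lemma sgn_tri2: "sgn (p::real) * sgn q * sgn r = 1 \<Longrightarrow> r > 0 \<Longrightarrow> sgn q = sgn p"
  by (auto simp: sgn_real_def split: if_splits)
lemma sgn_tri0: "sgn (p::real) * sgn q * sgn r = 1 \<Longrightarrow> p \<noteq> 0"
  by (auto simp: sgn_real_def split: if_splits)

lemma bal_decomp:
  assumes "social_balance X"
  shows "\<exists>s. (\<forall>i. \<bar>s i\<bar> = 1) \<and> pos (sconj s X) \<and> (\<forall>i j. X$i$j \<noteq> 0)"
proof -
  note b = assms[unfolded social_balance_def]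
  define a :: 'a where "a = undefined"
  define s where "s i = sgn (X$a$i)" for i
  have nz: "X$i$j \<noteq> 0" for i j
  proof -
    have "sgn (X$i$j) * sgn (X$j$i) * sgn (X$i$i) = 1" using b by blast
    then show ?thesis by (rule sgn_tri0)
  qed
  have s1: "\<bar>s i\<bar> = 1" for i using nz[of a i] unfolding s_def by (simp add: abs_sgn_eq)
  have sym: "sgn (X$j$a) = sgn (X$a$j)" for j
  proof -
    have "sgn (X$a$j) * sgn (X$j$a) * sgn (X$a$a) = 1" using b by blast
    from sgn_tri2[OF this] show ?thesis using b by simp
  qed
  have sg: "sgn (X$i$j) = s i * s j" for i j
  proof -
    have "sgn (X$a$i) * sgn (X$i$j) * sgn (X$j$a) = 1" using b by blast
    from sgn_tri[OF this] show ?thesis using sym[of j] unfolding s_def by simp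
  qed
  have "pos (sconj s X)" unfolding pos_def
  proof (intro allI)
    fix i j
    have "s i * s j * X$i$j = sgn (X$i$j) * X$i$j" using sg by simp
    also have "\<dots> = \<bar>X$i$j\<bar>" by (simp add: sgn_real_def abs_real_def)
    finally show "0 < sconj s X $ i $ j" using nz[of i j] by simp
  qed
  then show ?thesis using s1 nz by blast
qed

lemma sgn_s: "\<bar>s\<bar> = (1::real) \<Longrightarrow> sgn s = s"
  by (auto simp: sgn_real_def abs_if split: if_splits)

lemma bal_sconj_pos:
  assumes s: "\<forall>i. \<bar>s i\<bar> = 1" and Y: "pos Y"
  shows "social_balance (sconj s Y)"
proof -
  have sg: "sgn (sconj s Y $ i $ j) = s i * s j" for i j
    using s Y unfolding pos_def by (simp add: sgn_mult sgn_s)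
  have ss: "s i * s i = 1" for i using sq_one s by blast
  have "(s i * s j) * (s j * s k) * (s k * s i) = 1" for i j k
  proof -
    have "(s i * s j) * (s j * s k) * (s k * s i) = (s i * s i) * (s j * s j) * (s k * s k)"
      by (simp add: algebra_simps)
    then show ?thesis using ss by simp
  qed
  moreover have "0 < sconj s Y $ i $ i" for i using ss[of i] Y unfolding pos_def by simp
  ultimately show ?thesis unfolding social_balance_def sg by simp
qed

lemma bal_sgn_transfer:
  assumes "\<forall>i j. sgn (X$i$j) = sgn (Y$i$j)" "social_balance Y"
  shows "social_balance X"
proof -
  have "0 < X$i$i" for i
  proof -
    have "sgn (Y$i$i) = 1" using assms(2) unfolding social_balance_def by (simp add: sgn_1_pos)
    moreover have "sgn (X$i$i) = sgn (Y$i$i)" using assms(1) by blast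
    ultimately have "sgn (X$i$i) = 1" by simp
    then show ?thesis by (simp only: sgn_1_pos)
  qed
  then show ?thesis using assms unfolding social_balance_def by simp
qed

lemma bal_pres: assumes "social_balance X" shows "social_balance (f_IbM X)"
proof -
  obtain s where s: "\<forall>i. \<bar>s i\<bar> = 1" "pos (sconj s X)" using bal_decomp[OF assms] by blast
  have "f_IbM X = f_IbM (sconj s (sconj s X))" using sconj_sconj[OF s(1)] by simp
  also have "\<dots> = sconj s (f_IbM (sconj s X))" by (rule f_sconj[OF s(1)])
  finally show ?thesis using bal_sconj_pos[OF s(1) f_pos[OF s(2)]] by simp
qed




lemma rank_outer:
  fixes A :: "real^'n^'m"
  assumes "\<forall>i j. A$i$j = u i * v$j" "A \<noteq> 0"
  shows "rank A = 1"
proof -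
  have "rows A \<subseteq> span {v}"
  proof
    fix r assume "r \<in> rows A"
    then obtain i where "r = row i A" unfolding rows_def by auto
    then have "r = u i *\<^sub>R v" using assms(1) by (simp add: vec_eq_iff row_def)
    then show "r \<in> span {v}" by (simp add: span_base span_scale)
  qed
  then have "rank A \<le> 1" unfolding row_rank_def using dim_le_card[of "rows A" "{v}"] by simp
  moreover have "rank A \<noteq> 0" using assms(2) by (simp add: rank_eq_0)
  ultimately show ?thesis by simp
qed

lemma rank1_outer:
  fixes A :: "real^'n^'m"
  assumes "rank A = 1"
  shows "\<exists>u v. \<forall>i j. A$i$j = u i * v$j"
proof -
  obtain B where B: "B \<subseteq> rows A" "independent B" "rows A \<subseteq> span B" "card B = dim (rows A)"
    by (rule basis_exists)
  then have "card B = 1" using assms by (simp add: row_rank_def)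
  then obtain v where "B = {v}" by (metis One_nat_def card_1_singleton_iff)
  then have "row i A \<in> span {v}" for i using B(3) unfolding rows_def by auto
  then have "\<forall>i. \<exists>k. row i A = k *\<^sub>R v"
    unfolding real_vector.span_singleton by auto
  then obtain u where u: "\<forall>i. row i A = u i *\<^sub>R v" by metis
  have "A$i$j = u i * v$j" for i j
  proof -
    have "A$i$j = (row i A)$j" by (simp add: row_def)
    also have "\<dots> = u i * v$j" using u by simp
    finally show ?thesis .
  qed
  then show ?thesis by blast
qed

lemma sgn_abs_real: "sgn (x::real) * \<bar>x\<bar> = x"
  by (simp add: sgn_real_def)

lemma Q_elem:
  fixes s c :: "'n::{finite,linorder} \<Rightarrow> real"
  assumes s: "\<forall>i. \<bar>s i\<bar> = 1" and c: "\<forall>j. 0 < c j"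
  shows "(\<chi> i j. s i * s j * c j) \<in> (Q_IbM :: (real^('n::{finite,linorder})^('n::{finite,linorder})) set) \<and> rank (\<chi> i j. s i * s j * c j :: real^('n::{finite,linorder})^('n::{finite,linorder})) = 1"
proof -
  define Xs :: "real^('n::{finite,linorder})^('n::{finite,linorder})" where "Xs = (\<chi> i j. s i * s j * c j)"
  have ss: "s i * s i = 1" for i using sq_one s by blast
  have sg: "sgn (Xs$i$j) = s i * s j" for i j
    using s c unfolding Xs_def by (simp add: sgn_mult sgn_s)
  have S: "Xs \<in> S_rs_symm"
    unfolding S_rs_symm_def
  proof (intro CollectI conjI allI exI)
    show "sgn (Xs$i$j) = sgn (Xs$j$i)" for i j using sg by (simp add: mult.commute)
    show "0 < Xs$i$i" for i using ss[of i] c unfolding Xs_def by simp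
    show "0 < (\<chi> i. c i) $ i" for i using c by simp
    show "(\<chi> i. c i) $ i * Xs$i$j = (\<chi> i. c i) $ j * Xs$j$i" for i j
      unfolding Xs_def by (simp add: algebra_simps)
  qed
  have P: "permutation_matrix (mat 1 :: real^('n::{finite,linorder})^('n::{finite,linorder}))"
    unfolding permutation_matrix_def
    by (rule exI[of _ id]) (simp add: permutes_id mat_def)
  have Y: "sign_block_diag Xs"
    unfolding sign_block_diag_def
  proof (intro exI conjI allI)
    show "mono (\<lambda>_::('n::{finite,linorder}). 0::nat)" by (simp add: mono_def)
    show "(\<chi> j. s j * c j) $ i \<noteq> 0" for i using s[rule_format, of i] c[rule_format, of i] by auto
    show "Xs$i$j = (if (\<lambda>_. 0::nat) i = (\<lambda>_. 0::nat) j then sgn ((\<chi> j. s j * c j) $ i) * (\<chi> j. s j * c j) $ j else 0)" for i j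
      using s c unfolding Xs_def by (simp add: sgn_mult sgn_s)
  qed
  have "Xs \<in> Q_IbM" unfolding Q_IbM_def
    using S P Y by (intro CollectI conjI exI[of _ "mat 1"] exI[of _ Xs]) auto
  moreover have "rank Xs = 1"
  proof (rule rank_outer[of _ s "\<chi> j. s j * c j"])
    show "\<forall>i j. Xs $ i $ j = s i * (\<chi> j. s j * c j) $ j" unfolding Xs_def by simp
    have "Xs $ undefined $ undefined \<noteq> 0" using ss c[rule_format, of undefined] unfolding Xs_def by simp
    then show "Xs \<noteq> 0" by auto
  qed
  ultimately show ?thesis unfolding Xs_def by simp
qed

lemma if01_mult: "(if c then (1::real) else 0) * x = (if c then x else 0)"
  by simp

lemma perm_conj:
  assumes "permutation_matrix (P :: real^'n^'n)"
  shows "\<exists>q. \<forall>i j. (P ** M ** transpose P)$i$j = M$(q i)$(q j)"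
proof -
  obtain p where p: "p permutes (UNIV::'n set)" "P = (\<chi> i j. if i = p j then 1 else 0)"
    using assms unfolding permutation_matrix_def by blast
  have eq: "(i = p k) \<longleftrightarrow> (k = inv p i)" for i k using permutes_inverses[OF p(1)] by metis
  have A: "(P ** M)$i$j = M$(inv p i)$j" for M :: "real^'n^'n" and i j
  proof -
    have "(P ** M)$i$j = (\<Sum>k\<in>UNIV. (if k = inv p i then M$k$j else 0))"
      unfolding matrix_matrix_mult_def p(2) by (simp add: eq if01_mult mult.commute[of _ "(if _ then 1 else 0)"])
    then show ?thesis by simp
  qed
  have B: "(N ** transpose P)$i$j = N$i$(inv p j)" for N :: "real^'n^'n" and i j
  proof -
    have "(N ** transpose P)$i$j = (\<Sum>k\<in>UNIV. (if k = inv p j then N$i$k else 0))"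
      unfolding matrix_matrix_mult_def p(2) transpose_def by (simp add: eq if01_mult mult.commute[of _ "(if _ then 1 else 0)"])
    then show ?thesis by simp
  qed
  show ?thesis by (rule exI[of _ "inv p"]) (simp add: A B)
qed

lemma rank1_Q_form:
  assumes "Xs \<in> (Q_IbM :: (real^('n::{finite,linorder})^('n::{finite,linorder})) set)" "rank Xs = 1"
  shows "\<exists>\<sigma> c. (\<forall>i. \<bar>\<sigma> i\<bar> = 1) \<and> (\<forall>j. 0 < c j) \<and> Xs = sconj \<sigma> (\<chi> i j. c j)"
proof -
  obtain u v where uv: "\<forall>i j. Xs$i$j = u i * v$j" using rank1_outer[OF assms(2)] by blast
  have S: "Xs \<in> S_rs_symm" and "\<exists>P Y. permutation_matrix P \<and> sign_block_diag Y \<and> Xs = P ** Y ** transpose P"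
    using assms(1) unfolding Q_IbM_def by auto
  then obtain P Y where PY: "permutation_matrix P" "sign_block_diag Y" "Xs = P ** Y ** transpose P" by blast
  obtain q where q: "\<forall>i j. Xs$i$j = Y$(q i)$(q j)" using perm_conj[OF PY(1), of Y] PY(3) by auto
  from PY(2)[unfolded sign_block_diag_def] obtain b :: "'n::{finite,linorder} \<Rightarrow> nat" and w where bw0: "mono b" and bw: "\<forall>i. w$i \<noteq> 0" "\<forall>i j. Y$i$j = (if b i = b j then sgn (w$i) * (w$j) else 0)"
    by (elim exE conjE)
  have diag: "0 < Xs$i$i" for i using S unfolding S_rs_symm_def by blast
  have nz: "Xs$i$j \<noteq> 0" for i j
  proof -
    have "u i \<noteq> 0" "v$j \<noteq> 0" using diag[of i] diag[of j] uv by (metis less_irrefl mult_zero_left mult_zero_right)+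
    then show ?thesis using uv by simp
  qed
  have form: "Xs$i$j = sgn (w$(q i)) * w$(q j)" for i j
    using nz[of i j] q bw(2) by (auto split: if_splits)
  define \<sigma> where "\<sigma> i = sgn (w$(q i))" for i
  define c where "c j = \<bar>w$(q j)\<bar>" for j
  have "\<forall>i. \<bar>\<sigma> i\<bar> = 1" unfolding \<sigma>_def using bw(1) by (simp add: abs_sgn_eq)
  moreover have "\<forall>j. 0 < c j" unfolding c_def using bw(1) by simp
  moreover have "Xs = sconj \<sigma> (\<chi> i j. c j)"
    by (simp add: vec_eq_iff form \<sigma>_def c_def mult.assoc sgn_abs_real)
  ultimately show ?thesis by blast
qed

lemma const_rows_fixed:
  assumes "\<forall>j. 0 < c j"
  shows "f_IbM (\<chi> i j. c j) = (\<chi> i j. c j)"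
proof -
  have "rs (\<chi> i j. c j) i = (\<Sum>k\<in>UNIV. c k)" for i unfolding rs_def using assms by (simp add: less_imp_le)
  moreover have "(\<Sum>k\<in>UNIV. c k) > 0" using assms by (intro sum_pos) auto
  ultimately show ?thesis by (simp add: vec_eq_iff f_nth sum_distrib_right[symmetric])
qed

lemma abs_ss: "\<forall>i. \<bar>\<sigma> i\<bar> = (1::real) \<Longrightarrow> \<bar>\<sigma> i * \<sigma> j * x\<bar> = \<bar>x\<bar>"
  by (simp add: abs_mult)

lemma part_i:
  assumes "Xs \<in> (Q_IbM :: (real^('n::{finite,linorder})^('n::{finite,linorder})) set)" "rank Xs = 1"
  shows "fixed_point f_IbM Xs \<and> locally_stable f_IbM Xs"
proof -
  obtain \<sigma> c where \<sigma>: "\<forall>i. \<bar>\<sigma> i\<bar> = 1" and c: "\<forall>j. 0 < c j" and Xs: "Xs = sconj \<sigma> (\<chi> i j. c j)"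
    using rank1_Q_form[OF assms] by blast
  have "f_IbM Xs = Xs" unfolding Xs f_sconj[OF \<sigma>] const_rows_fixed[OF c] ..
  moreover have "locally_stable f_IbM Xs"
    unfolding locally_stable_def
  proof (intro allI impI)
    fix \<epsilon> :: real assume "0 < \<epsilon>"
    define cm where "cm = Min (range c)"
    have cm: "0 < cm" unfolding cm_def using c by (subst Min_gr_iff) auto
    have cmle: "cm \<le> c j" for j unfolding cm_def by (rule Min_le) auto
    define \<delta> where "\<delta> = min \<epsilon> cm"
    have "0 < \<delta>" unfolding \<delta>_def using cm \<open>0 < \<epsilon>\<close> by simp
    moreover have "\<forall>t i j. \<bar>(f_IbM ^^ t) X0 $ i $ j - Xs $ i $ j\<bar> < \<epsilon>"
      if X0: "\<forall>i j. \<bar>X0 $ i $ j - Xs $ i $ j\<bar> < \<delta>" for X0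
    proof (intro allI)
      fix t i j
      define Y0 where "Y0 = sconj \<sigma> X0"
      have X0eq: "X0 = sconj \<sigma> Y0" unfolding Y0_def using sconj_sconj[OF \<sigma>] by simp
      have ss: "\<sigma> a * \<sigma> a = 1" for a using sq_one \<sigma> by blast
      have Xse: "Xs$a$b = \<sigma> a * \<sigma> b * c b" for a b unfolding Xs by simp
      have dY: "\<bar>Y0$a$b - c b\<bar> < \<delta>" for a b
      proof -
        have "Y0$a$b - c b = \<sigma> a * \<sigma> b * (X0$a$b - Xs$a$b)"
          unfolding Y0_def Xse using ss[of a] ss[of b]
          by (simp add: algebra_simps)
        then have "\<bar>Y0$a$b - c b\<bar> = \<bar>X0$a$b - Xs$a$b\<bar>" using abs_ss[OF \<sigma>] by simp
        then show ?thesis using X0 by simp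
      qed
      have Ypos: "pos Y0" unfolding pos_def
      proof (intro allI)
        fix a b show "0 < Y0$a$b" using dY[of a b] cmle[of b] unfolding \<delta>_def by (simp add: abs_less_iff)
      qed
      have lo: "c j - \<delta> < cmin Y0 j"
      proof -
        obtain k where "Y0$k$j = cmin Y0 j" using cmin_ex by metis
        then show ?thesis using dY[of k j] by (simp add: abs_less_iff)
      qed
      have hi: "cmax Y0 j < c j + \<delta>"
      proof -
        obtain k where "Y0$k$j = cmax Y0 j" using cmax_ex by metis
        then show ?thesis using dY[of k j] by (simp add: abs_less_iff)
      qed
      have bnd: "cmin Y0 j \<le> (f_IbM ^^ t) Y0 $i$j \<and> (f_IbM ^^ t) Y0 $i$j \<le> cmax Y0 j"
        by (rule iter_bounds[OF Ypos]) (auto simp: cmin_le cmax_ge)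
      have "(f_IbM ^^ t) X0 $ i $ j - Xs $ i $ j = \<sigma> i * \<sigma> j * ((f_IbM ^^ t) Y0 $i$j - c j)"
        unfolding X0eq funpow_sconj[OF \<sigma>] Xse by (simp add: algebra_simps)
      then have "\<bar>(f_IbM ^^ t) X0 $ i $ j - Xs $ i $ j\<bar> = \<bar>(f_IbM ^^ t) Y0 $i$j - c j\<bar>"
        using abs_ss[OF \<sigma>] by simp
      also have "\<dots> < \<delta>" using bnd lo hi by (simp add: abs_less_iff)
      also have "\<dots> \<le> \<epsilon>" unfolding \<delta>_def by simp
      finally show "\<bar>(f_IbM ^^ t) X0 $ i $ j - Xs $ i $ j\<bar> < \<epsilon>" .
    qed
    ultimately show "\<exists>\<delta>>0. \<forall>X0. (\<forall>i j. \<bar>X0 $ i $ j - Xs $ i $ j\<bar> < \<delta>) \<longrightarrow>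
         (\<forall>t i j. \<bar>(f_IbM ^^ t) X0 $ i $ j - Xs $ i $ j\<bar> < \<epsilon>)" by blast
  qed
  ultimately show ?thesis unfolding fixed_point_def by blast
qed




lemma min_abs_ge:
  assumes "\<forall>i j. r \<le> \<bar>X$i$j\<bar>"
  shows "r \<le> min_abs_entry X"
proof -
  have eq: "{\<bar>X$i$j\<bar> | i j. True} = (\<lambda>(i,j). \<bar>X$i$j\<bar>) ` UNIV" by auto
  show ?thesis unfolding min_abs_entry_def eq
    by (subst Min_ge_iff) (use assms in auto)
qed

lemma min_abs_le: "min_abs_entry X \<le> \<bar>X$i$j\<bar>"
proof -
  have eq: "{\<bar>X$i$j\<bar> | i j. True} = (\<lambda>(i,j). \<bar>X$i$j\<bar>) ` UNIV" by auto
  show ?thesis unfolding min_abs_entry_def eq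
    by (rule Min_le) auto
qed

lemma bal_to_ac:
  fixes X0 :: "real^('n::{finite,linorder})^('n::{finite,linorder})"
  assumes "social_balance (traj X0 t0)"
  shows "Liminf sequentially (\<lambda>t. ereal (min_abs_entry (traj X0 t))) > 0"
    and "\<exists>Xs\<in>Q_IbM. rank Xs = 1 \<and> traj X0 \<longlonglongrightarrow> Xs"
proof -
  obtain s where s: "\<forall>i. \<bar>s i\<bar> = 1" and Y1: "pos (sconj s (traj X0 t0))"
    using bal_decomp[OF assms] by blast
  define Y where "Y = sconj s (traj X0 t0)"
  have X1: "traj X0 t0 = sconj s Y" unfolding Y_def using sconj_sconj[OF s] by simp
  have trk: "traj X0 (t0 + k) = sconj s ((f_IbM ^^ k) Y)" for k
    unfolding traj_add X1 funpow_sconj[OF s] ..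
  have Ypos: "pos Y" using Y1 unfolding Y_def .
  have cminpos: "0 < cmin Y j" for j
    using cmin_ex[of Y j] Ypos unfolding pos_def by metis
  define m0 where "m0 = Min (range (cmin Y))"
  have m0pos: "0 < m0" unfolding m0_def using cminpos by (subst Min_gr_iff) auto
  have m0le: "m0 \<le> cmin Y j" for j unfolding m0_def by (rule Min_le) auto
  have "m0 \<le> min_abs_entry (traj X0 (t0 + k))" for k
  proof (rule min_abs_ge, intro allI)
    fix i j
    have "cmin Y j \<le> (f_IbM ^^ k) Y $ i $ j"
      using iter_bounds[OF Ypos, of "cmin Y j" j "cmax Y j" k i] by (auto simp: cmin_le cmax_ge)
    then show "m0 \<le> \<bar>traj X0 (t0 + k) $ i $ j\<bar>"
      unfolding trk using m0le[of j] abs_ss[OF s] by simp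
  qed
  then have "\<forall>\<^sub>F t in sequentially. ereal m0 \<le> ereal (min_abs_entry (traj X0 t))"
    unfolding eventually_sequentially
  proof (intro exI[of _ t0] allI impI)
    fix t assume "t0 \<le> t"
    then obtain k where "t = t0 + k" using le_Suc_ex by blast
    then show "ereal m0 \<le> ereal (min_abs_entry (traj X0 t))" using \<open>\<And>k. m0 \<le> min_abs_entry (traj X0 (t0 + k))\<close> by simp
  qed
  then have "ereal m0 \<le> Liminf sequentially (\<lambda>t. ereal (min_abs_entry (traj X0 t)))"
    by (rule Liminf_bounded)
  then show "Liminf sequentially (\<lambda>t. ereal (min_abs_entry (traj X0 t))) > 0"
  proof -
    have "(0::ereal) < ereal m0" using m0pos by simp
    then show ?thesis using \<open>ereal m0 \<le> _\<close> by (rule order_less_le_trans)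
  qed
  obtain c where c: "\<forall>j. 0 < c j" and lim: "(\<lambda>t. (f_IbM ^^ t) Y) \<longlonglongrightarrow> (\<chi> i j. c j)"
    using pos_conv[OF Ypos] by blast
  have Q: "(\<chi> i j. s i * s j * c j) \<in> (Q_IbM :: (real^('n::{finite,linorder})^('n::{finite,linorder})) set) \<and> rank (\<chi> i j. s i * s j * c j :: real^('n::{finite,linorder})^('n::{finite,linorder})) = 1"
    by (rule Q_elem[OF s c])
  have "(\<lambda>k. traj X0 (k + t0)) \<longlonglongrightarrow> (\<chi> i j. s i * s j * c j)"
  proof (intro vec_tendstoI)
    fix i j
    have "(\<lambda>k. (f_IbM ^^ k) Y $ i $ j) \<longlonglongrightarrow> c j"
      using tendsto_vec_nth[OF tendsto_vec_nth[OF lim, of i], of j] by simp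
    then have "(\<lambda>k. s i * s j * (f_IbM ^^ k) Y $ i $ j) \<longlonglongrightarrow> s i * s j * c j"
      by (rule tendsto_mult_left)
    then show "(\<lambda>k. traj X0 (k + t0) $ i $ j) \<longlonglongrightarrow> (\<chi> i j. s i * s j * c j) $ i $ j"
      using trk by (simp add: add.commute)
  qed
  then have "traj X0 \<longlonglongrightarrow> (\<chi> i j. s i * s j * c j)" by (rule LIMSEQ_offset)
  then show "\<exists>Xs\<in>Q_IbM. rank Xs = 1 \<and> traj X0 \<longlonglongrightarrow> Xs" using Q by blast
qed

lemma c_to_b:
  fixes X0 :: "real^('n::{finite,linorder})^('n::{finite,linorder})"
  assumes "Xs \<in> S_rs_symm" "rank Xs = 1" "traj X0 \<longlonglongrightarrow> Xs"
  shows "\<exists>t0. \<forall>t\<ge>t0. social_balance (traj X0 t)"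
proof -
  obtain u v where uv: "\<forall>i j. Xs$i$j = u i * v$j" using rank1_outer[OF assms(2)] by blast
  have diag: "0 < Xs$i$i" for i using assms(1) unfolding S_rs_symm_def by blast
  have uvs: "sgn (u i) * sgn (v$i) = 1" for i using diag[of i] uv by (simp add: sgn_mult[symmetric] sgn_1_pos)
  have nz: "Xs$i$j \<noteq> 0" for i j
  proof -
    have "u i \<noteq> 0" "v$j \<noteq> 0" using uvs[of i] uvs[of j] by auto
    then show ?thesis using uv by simp
  qed
  have balXs: "social_balance Xs"
    unfolding social_balance_def
  proof (intro conjI allI)
    show "0 < Xs$i$i" for i by (rule diag)
    fix i j k
    have "sgn (Xs$i$j) * sgn (Xs$j$k) * sgn (Xs$k$i) =
          (sgn (u i) * sgn (v$i)) * (sgn (u j) * sgn (v$j)) * (sgn (u k) * sgn (v$k))"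
      using uv by (simp add: sgn_mult algebra_simps)
    then show "sgn (Xs$i$j) * sgn (Xs$j$k) * sgn (Xs$k$i) = 1" using uvs by simp
  qed
  have ev: "\<forall>\<^sub>F t in sequentially. sgn (traj X0 t $ i $ j) = sgn (Xs$i$j)" for i j
  proof -
    have L: "(\<lambda>t. traj X0 t $ i $ j) \<longlonglongrightarrow> Xs$i$j"
      using tendsto_vec_nth[OF tendsto_vec_nth[OF assms(3), of i], of j] by simp
    show ?thesis
    proof (cases "Xs$i$j > 0")
      case True
      from order_tendstoD(1)[OF L True] show ?thesis
        by (rule eventually_mono) (use True in simp)
    next
      case False
      then have neg: "Xs$i$j < 0" using nz[of i j] by simp
      from order_tendstoD(2)[OF L neg] show ?thesis
        by (rule eventually_mono) (use neg in simp)
    qed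
  qed
  have "\<forall>\<^sub>F t in sequentially. \<forall>i j. sgn (traj X0 t $ i $ j) = sgn (Xs$i$j)"
  proof -
    have "\<forall>\<^sub>F t in sequentially. \<forall>j. sgn (traj X0 t $ i $ j) = sgn (Xs$i$j)" for i
      by (rule eventually_all_finite) (rule ev)
    then show ?thesis by (rule eventually_all_finite)
  qed
  then obtain N where "\<forall>t\<ge>N. \<forall>i j. sgn (traj X0 t $ i $ j) = sgn (Xs$i$j)"
    unfolding eventually_sequentially by blast
  then show ?thesis using bal_sgn_transfer balXs by blast
qed




lemma S_diag: "X \<in> S_rs_symm \<Longrightarrow> 0 < X$i$i"
  unfolding S_rs_symm_def by blast

lemma S_sgn: "X \<in> S_rs_symm \<Longrightarrow> sgn (X$i$j) = sgn (X$j$i)"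
  unfolding S_rs_symm_def by blast

lemma S_rs_pos: assumes "X \<in> S_rs_symm" shows "0 < rs X i"
  using rs_ge[of X i i] S_diag[OF assms, of i] by linarith

lemma S_inv:
  assumes XS: "X \<in> S_rs_symm"
  shows "f_IbM X \<in> S_rs_symm"
proof -
  obtain \<gamma> :: "real^'a" where g: "\<forall>i. 0 < \<gamma>$i" "\<forall>i j. \<gamma>$i * X$i$j = \<gamma>$j * X$j$i"
    using XS unfolding S_rs_symm_def by blast
  have rsp: "0 < rs X i" for i by (rule S_rs_pos[OF XS])
  have nn: "0 \<le> X$i$k * X$k$i" for i k
  proof -
    have "\<gamma>$i * X$i$k = \<gamma>$k * X$k$i" using g(2) by blast
    then have eq: "\<gamma>$i * (X$i$k * X$k$i) = \<gamma>$k * (X$k$i * X$k$i)" by (simp add: mult.assoc[symmetric])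
    have "0 \<le> \<gamma>$k * (X$k$i * X$k$i)" using g(1) by (simp add: less_imp_le)
    then have "0 \<le> \<gamma>$i * (X$i$k * X$k$i)" by (simp only: eq)
    moreover have "0 < \<gamma>$i" using g(1) by blast
    ultimately show ?thesis using mult_pos_neg[of "\<gamma>$i" "X$i$k * X$k$i"] by linarith
  qed
  have diag: "0 < f_IbM X $ i $ i" for i
  proof -
    have "0 < (\<Sum>k\<in>UNIV. X$i$k * X$k$i)"
      using S_diag[OF XS, of i] nn by (intro sum_pos2[of _ i]) auto
    then show ?thesis using rsp[of i] by (simp add: f_nth)
  qed
  define \<gamma>' :: "real^'a" where "\<gamma>' = (\<chi> i. \<gamma>$i * rs X i)"
  have g'pos: "0 < \<gamma>'$i" for i unfolding \<gamma>'_def using g(1) rsp by simp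
  have g'sym: "\<gamma>'$i * f_IbM X$i$j = \<gamma>'$j * f_IbM X$j$i" for i j
  proof -
    have e: "\<gamma>'$i * f_IbM X$i$j = (\<Sum>k\<in>UNIV. \<gamma>$k * X$k$i * X$k$j)" for i j
    proof -
      have "\<gamma>'$i * f_IbM X$i$j = \<gamma>$i * (\<Sum>k\<in>UNIV. X$i$k * X$k$j)"
        unfolding \<gamma>'_def f_nth using rsp[of i] by simp
      also have "\<dots> = (\<Sum>k\<in>UNIV. (\<gamma>$i * X$i$k) * X$k$j)" by (simp add: sum_distrib_left mult.assoc)
      also have "\<dots> = (\<Sum>k\<in>UNIV. \<gamma>$k * X$k$i * X$k$j)"
      proof (rule sum.cong[OF refl])
        fix k have "\<gamma>$i * X$i$k = \<gamma>$k * X$k$i" using g(2) by blast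
        then show "\<gamma>$i * X$i$k * X$k$j = \<gamma>$k * X$k$i * X$k$j" by simp
      qed
      finally show ?thesis .
    qed
    show ?thesis unfolding e by (simp add: algebra_simps)
  qed
  have sgn: "sgn (f_IbM X$i$j) = sgn (f_IbM X$j$i)" for i j
  proof -
    have "sgn (\<gamma>'$i) * sgn (f_IbM X$i$j) = sgn (\<gamma>'$j) * sgn (f_IbM X$j$i)"
      using arg_cong[OF g'sym[of i j], of sgn] by (simp add: sgn_mult)
    then show ?thesis using g'pos[of i] g'pos[of j] by simp
  qed
  show ?thesis unfolding S_rs_symm_def using diag g'pos g'sym sgn by blast
qed

lemma traj_S: "X0 \<in> S_rs_symm \<Longrightarrow> traj X0 t \<in> S_rs_symm"
  by (induction t) (auto simp: traj_def intro: S_inv)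

definition cm :: "real^'n^'n \<Rightarrow> 'n \<Rightarrow> real" where "cm X j = Max (range (\<lambda>i. \<bar>X$i$j\<bar>))"
definition Phi :: "real^'n^'n \<Rightarrow> real" where "Phi X = (\<Sum>j\<in>UNIV. cm X j)"

lemma cm_ge: "\<bar>X$i$j\<bar> \<le> cm X j"
  unfolding cm_def by (rule Max_ge) auto
lemma cm_leI: "(\<And>i. \<bar>X$i$j\<bar> \<le> a) \<Longrightarrow> cm X j \<le> a"
proof -
  have "cm X j \<in> range (\<lambda>i. \<bar>X$i$j\<bar>)" unfolding cm_def by (rule Max_in) auto
  then show "(\<And>i. \<bar>X$i$j\<bar> \<le> a) \<Longrightarrow> cm X j \<le> a" by auto
qed
lemma cm_nn: "0 \<le> cm X j" using cm_ge[of X j j] by linarith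
lemma Phi_nn: "0 \<le> Phi X" unfolding Phi_def by (intro sum_nonneg) (simp add: cm_nn)
lemma rs_le_Phi: "rs X i \<le> Phi X"
  unfolding rs_def Phi_def by (intro sum_mono) (rule cm_ge)
lemma cm_le_Phi: "cm X j \<le> Phi X"
  unfolding Phi_def by (rule member_le_sum) (auto simp: cm_nn)

lemma wsum_abs: assumes "0 < rs X r" shows "(\<Sum>l\<in>UNIV. \<bar>X$r$l\<bar> / rs X r) = 1"
proof -
  have "(\<Sum>l\<in>UNIV. \<bar>X$r$l\<bar> / rs X r) = (\<Sum>l\<in>UNIV. \<bar>X$r$l\<bar>) / rs X r"
    by (rule sum_divide_distrib[symmetric])
  also have "\<dots> = rs X r / rs X r" unfolding rs_def ..
  finally show ?thesis using assms by simp
qed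

lemma absf: assumes "0 < rs X r"
  shows "\<bar>f_IbM X $r$k\<bar> \<le> (\<Sum>l\<in>UNIV. (\<bar>X$r$l\<bar> / rs X r) * \<bar>X$l$k\<bar>)"
proof -
  have "\<bar>f_IbM X $r$k\<bar> = \<bar>\<Sum>l\<in>UNIV. X$r$l * X$l$k\<bar> / rs X r"
    unfolding f_nth abs_divide using assms by simp
  also have "\<dots> \<le> (\<Sum>l\<in>UNIV. \<bar>X$r$l * X$l$k\<bar>) / rs X r"
    using assms by (intro divide_right_mono sum_abs) auto
  also have "\<dots> = (\<Sum>l\<in>UNIV. (\<bar>X$r$l\<bar> / rs X r) * \<bar>X$l$k\<bar>)"
    unfolding sum_divide_distrib by (rule sum.cong) (simp_all add: abs_mult)
  finally show ?thesis .
qed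

lemma avg_cm:
  assumes "0 < rs X r"
  shows "(\<Sum>l\<in>UNIV. (\<bar>X$r$l\<bar> / rs X r) * \<bar>X$l$k\<bar>) \<le> cm X k"
proof -
  have w: "\<forall>l\<in>UNIV. 0 \<le> \<bar>X$r$l\<bar> / rs X r" using assms by simp
  have "(\<Sum>l\<in>UNIV. (\<bar>X$r$l\<bar> / rs X r) * \<bar>X$l$k\<bar>) \<le> cm X k - 0 * 0"
    by (rule avg_upper[OF _ w wsum_abs[OF assms], where i=k and e=0 and \<eta>=0]) (use w in \<open>auto simp: cm_ge\<close>)
  then show ?thesis by simp
qed

lemma cm_mono: assumes "\<forall>r. 0 < rs X r" shows "cm (f_IbM X) k \<le> cm X k"
proof (rule cm_leI)
  fix i show "\<bar>f_IbM X $ i $ k\<bar> \<le> cm X k"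
    using absf[of X i k] avg_cm[of X i k] assms by simp
qed

lemma Phi_mono: assumes "\<forall>r. 0 < rs X r" shows "Phi (f_IbM X) \<le> Phi X"
  unfolding Phi_def by (intro sum_mono cm_mono[OF assms])




lemma sgn_neg3:
  fixes a b c d :: real
  assumes "a \<noteq> 0" "b \<noteq> 0" "c \<noteq> 0" "sgn c = sgn d" "sgn a * sgn b * sgn d \<noteq> 1"
  shows "a * b * c < 0"
proof -
  have "d \<noteq> 0" using assms(3,4) by (auto simp: sgn_real_def split: if_splits)
  then have "sgn a * sgn b * sgn d = -1" using assms(1,2,5) by (auto simp: sgn_real_def split: if_splits)
  then have "sgn (a * b * c) = -1" using assms(4) by (simp add: sgn_mult)
  then show ?thesis by (simp add: sgn_1_neg)
qed

lemma cancel2: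
  fixes g :: "'a \<Rightarrow> real"
  assumes "finite A" "i \<in> A" "j \<in> A" "i \<noteq> j" "g i * g j < 0"
  shows "\<bar>sum g A\<bar> \<le> (\<Sum>l\<in>A. \<bar>g l\<bar>) - 2 * min \<bar>g i\<bar> \<bar>g j\<bar>"
proof -
  have j: "j \<in> A - {i}" using assms by auto
  have s1: "sum g A = g i + (g j + sum g (A - {i} - {j}))"
    using sum.remove[OF assms(1,2), of g] sum.remove[OF _ j, of g] assms(1) by simp
  have s2: "(\<Sum>l\<in>A. \<bar>g l\<bar>) = \<bar>g i\<bar> + (\<bar>g j\<bar> + (\<Sum>l\<in>A - {i} - {j}. \<bar>g l\<bar>))"
    using sum.remove[OF assms(1,2), of "\<lambda>l. \<bar>g l\<bar>"] sum.remove[OF _ j, of "\<lambda>l. \<bar>g l\<bar>"] assms(1) by simp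
  have r: "\<bar>sum g (A - {i} - {j})\<bar> \<le> (\<Sum>l\<in>A - {i} - {j}. \<bar>g l\<bar>)" by (rule sum_abs)
  have p: "\<bar>g i + g j\<bar> \<le> \<bar>g i\<bar> + \<bar>g j\<bar> - 2 * min \<bar>g i\<bar> \<bar>g j\<bar>"
    using assms(5) by (auto simp: mult_less_0_iff min_def abs_if)
  have "\<bar>sum g A\<bar> \<le> \<bar>g i + g j\<bar> + \<bar>sum g (A - {i} - {j})\<bar>"
    unfolding s1 by (metis abs_triangle_ineq add.assoc)
  then show ?thesis using s2 r p by linarith
qed

lemma strict_step:
  fixes X :: "real^'n^'n"
  assumes XS: "X \<in> S_rs_symm" and m: "0 < m" "\<forall>a b. m \<le> \<bar>X$a$b\<bar>" "\<forall>a b. m \<le> \<bar>f_IbM X$a$b\<bar>"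
    and nb: "\<not> social_balance X" and B: "Phi X \<le> B"
  shows "Phi (f_IbM (f_IbM X)) \<le> Phi X - (m / B) * (2 * m * m / B)"
proof -
  define X' where "X' = f_IbM X"
  have X'S: "X' \<in> S_rs_symm" unfolding X'_def by (rule S_inv[OF XS])
  have rsX: "0 < rs X r" for r by (rule S_rs_pos[OF XS])
  have rsX': "0 < rs X' r" for r by (rule S_rs_pos[OF X'S])
  have nz: "X$a$b \<noteq> 0" for a b using m(1,2) by (metis abs_zero not_le)
  obtain i j k where ijk: "sgn (X$i$j) * sgn (X$j$k) * sgn (X$k$i) \<noteq> 1"
    using nb S_diag[OF XS] unfolding social_balance_def by blast
  have neg3: "X$i$j * X$j$k * X$i$k < 0"
    by (rule sgn_neg3[OF nz nz nz S_sgn[OF XS] ijk])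
  have ji: "j \<noteq> i"
  proof
    assume "j = i"
    then have "0 \<le> X$i$j * X$j$k * X$i$k"
      using S_diag[OF XS, of i] by (simp add: mult.assoc)
    then show False using neg3 by simp
  qed
  define g where "g l = X$i$l * X$l$k" for l
  have gneg: "g i * g j < 0"
  proof -
    have "g i * g j = X$i$i * (X$i$j * X$j$k * X$i$k)" unfolding g_def by (simp add: algebra_simps)
    then show ?thesis using S_diag[OF XS, of i] neg3 by (simp add: mult_pos_neg)
  qed
  have gi: "m * m \<le> \<bar>g i\<bar>" unfolding g_def abs_mult using m by (intro mult_mono) auto
  have gj: "m * m \<le> \<bar>g j\<bar>" unfolding g_def abs_mult using m by (intro mult_mono) auto
  have c: "\<bar>sum g UNIV\<bar> \<le> (\<Sum>l\<in>UNIV. \<bar>g l\<bar>) - 2 * (m * m)"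
  proof -
    have "\<bar>sum g UNIV\<bar> \<le> (\<Sum>l\<in>UNIV. \<bar>g l\<bar>) - 2 * min \<bar>g i\<bar> \<bar>g j\<bar>"
      by (rule cancel2[OF _ _ _ ji[symmetric] gneg]) auto
    moreover have "m * m \<le> min \<bar>g i\<bar> \<bar>g j\<bar>" using gi gj by simp
    ultimately show ?thesis by linarith
  qed
  have PhiX': "Phi X' \<le> Phi X" unfolding X'_def using Phi_mono rsX by blast
  have rsB: "rs X i \<le> B" using rs_le_Phi[of X i] B by linarith
  define \<eta> where "\<eta> = 2 * m * m / B"
  have "0 < B" using rsX[of i] rsB by linarith
  have eta0: "0 \<le> \<eta>" unfolding \<eta>_def using \<open>0 < B\<close> by simp
  have step1: "\<bar>X'$i$k\<bar> \<le> cm X k - \<eta>"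
  proof -
    have "\<bar>X'$i$k\<bar> = \<bar>sum g UNIV\<bar> / rs X i"
      unfolding X'_def f_nth abs_divide g_def using rsX[of i] by simp
    also have "\<dots> \<le> ((\<Sum>l\<in>UNIV. \<bar>g l\<bar>) - 2 * (m * m)) / rs X i"
      using rsX[of i] c by (intro divide_right_mono) auto
    also have "\<dots> = (\<Sum>l\<in>UNIV. (\<bar>X$i$l\<bar> / rs X i) * \<bar>X$l$k\<bar>) - 2 * m * m / rs X i"
      unfolding diff_divide_distrib sum_divide_distrib g_def
      by (simp add: abs_mult mult.assoc)
    also have "\<dots> \<le> cm X k - 2 * m * m / rs X i" using avg_cm[OF rsX] by simp
    also have "2 * m * m / B \<le> 2 * m * m / rs X i"
      using rsX[of i] rsB m(1) by (intro frac_le) auto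
    then have "cm X k - 2 * m * m / rs X i \<le> cm X k - \<eta>" unfolding \<eta>_def by simp
    finally show ?thesis .
  qed
  have colk: "cm (f_IbM X') k \<le> cm X k - (m / B) * \<eta>"
  proof (rule cm_leI)
    fix r
    have w: "\<forall>l\<in>UNIV. 0 \<le> \<bar>X'$r$l\<bar> / rs X' r" using rsX'[of r] by simp
    have wi: "m / B \<le> \<bar>X'$r$i\<bar> / rs X' r"
    proof (rule frac_le)
      show "m \<le> \<bar>X'$r$i\<bar>" using m(3) unfolding X'_def by blast
      show "rs X' r \<le> B" using rs_le_Phi[of X' r] PhiX' B by linarith
    qed (use m rsX' in auto)
    have xs: "\<forall>l\<in>UNIV. \<bar>X'$l$k\<bar> \<le> cm X k"
      using cm_ge[of X' _ k] cm_mono[of X k] rsX unfolding X'_def by (meson order_trans)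
    have "(\<Sum>l\<in>UNIV. (\<bar>X'$r$l\<bar> / rs X' r) * \<bar>X'$l$k\<bar>) \<le> cm X k - (m / B) * \<eta>"
      by (rule avg_upper[OF _ w wsum_abs[OF rsX'] xs _ step1 wi eta0]) auto
    then show "\<bar>f_IbM X' $ r $ k\<bar> \<le> cm X k - (m / B) * \<eta>"
      using absf[OF rsX'[of r], of k] by linarith
  qed
  have cols: "cm (f_IbM X') j' \<le> cm X j' - (if j' = k then (m / B) * \<eta> else 0)" for j'
  proof (cases "j' = k")
    case True then show ?thesis using colk by simp
  next
    case False
    have "cm (f_IbM X') j' \<le> cm X' j'" using cm_mono rsX' by blast
    also have "\<dots> \<le> cm X j'" unfolding X'_def using cm_mono rsX by blast
    finally show ?thesis using False by simp
  qed
  have "Phi (f_IbM X') \<le> (\<Sum>j'\<in>UNIV. cm X j' - (if j' = k then (m / B) * \<eta> else 0))"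
    unfolding Phi_def by (intro sum_mono cols)
  also have "\<dots> = Phi X - (m / B) * \<eta>"
    unfolding Phi_def sum_subtractf by simp
  finally show ?thesis unfolding X'_def \<eta>_def .
qed




lemma a_to_b:
  fixes X0 :: "real^('n::{finite,linorder})^('n::{finite,linorder})"
  assumes XS: "X0 \<in> S_rs_symm"
    and L: "Liminf sequentially (\<lambda>t. ereal (min_abs_entry (traj X0 t))) > 0"
  shows "\<exists>t0. \<forall>t\<ge>t0. social_balance (traj X0 t)"
proof (rule ccontr)
  assume nb: "\<not> (\<exists>t0. \<forall>t\<ge>t0. social_balance (traj X0 t))"
  obtain r where r: "0 < ereal r" "ereal r < Liminf sequentially (\<lambda>t. ereal (min_abs_entry (traj X0 t)))"
    using ereal_dense2[OF L] by blast
  have rpos: "0 < r" using r(1) by simp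
  have "\<forall>\<^sub>F t in sequentially. ereal r < ereal (min_abs_entry (traj X0 t))"
    by (rule less_LiminfD[OF r(2)])
  then obtain T where T: "\<forall>t\<ge>T. r < min_abs_entry (traj X0 t)"
    unfolding eventually_sequentially by auto
  have ent: "\<forall>a b. r \<le> \<bar>traj X0 t $ a $ b\<bar>" if "T \<le> t" for t
    using T that min_abs_le[of "traj X0 t"] by (meson less_imp_le order_trans)
  have St: "traj X0 t \<in> S_rs_symm" for t by (rule traj_S[OF XS])
  have unb: "\<not> social_balance (traj X0 t)" if "T \<le> t" for t
  proof
    assume b: "social_balance (traj X0 t)"
    have "social_balance (traj X0 (t + k))" for k
      by (induction k) (use b in \<open>simp_all add: traj_Suc bal_pres\<close>)
    then have "\<forall>t'\<ge>t. social_balance (traj X0 t')" by (metis le_add_diff_inverse)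
    then show False using nb by blast
  qed
  define B where "B = Phi (traj X0 T)"
  have Pmono: "Phi (traj X0 (T + k)) \<le> B" for k
  proof (induction k)
    case (Suc k)
    have "Phi (traj X0 (T + Suc k)) \<le> Phi (traj X0 (T + k))"
      using Phi_mono[of "traj X0 (T + k)"] S_rs_pos[OF St] by (simp add: traj_Suc)
    then show ?case using Suc by linarith
  qed (simp add: B_def)
  have Bpos: "0 < B"
  proof -
    have "r \<le> \<bar>traj X0 T $ undefined $ undefined\<bar>" using ent by blast
    also have "\<dots> \<le> cm (traj X0 T) undefined" by (rule cm_ge)
    also have "\<dots> \<le> B" unfolding B_def by (rule cm_le_Phi)
    finally show ?thesis using rpos by simp
  qed
  define \<delta> where "\<delta> = (r / B) * (2 * r * r / B)"
  have dpos: "0 < \<delta>" unfolding \<delta>_def using rpos Bpos by simp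
  have dec: "Phi (traj X0 (T + 2 * k)) \<le> B - real k * \<delta>" for k
  proof (induction k)
    case 0 then show ?case by (simp add: B_def)
  next
    case (Suc k)
    define X where "X = traj X0 (T + 2 * k)"
    have e1: "traj X0 (T + 2 * Suc k) = f_IbM (f_IbM X)" unfolding X_def
      by (simp add: traj_Suc)
    have "Phi (f_IbM (f_IbM X)) \<le> Phi X - \<delta>"
      unfolding \<delta>_def
    proof (rule strict_step)
      show "X \<in> S_rs_symm" unfolding X_def by (rule St)
      show "0 < r" by (rule rpos)
      show "\<forall>a b. r \<le> \<bar>X $ a $ b\<bar>" unfolding X_def by (rule ent) simp
      show "\<forall>a b. r \<le> \<bar>f_IbM X $ a $ b\<bar>" unfolding X_def traj_Suc[symmetric] by (rule ent) simp
      show "\<not> social_balance X" unfolding X_def by (rule unb) simp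
      show "Phi X \<le> B" unfolding X_def using Pmono by blast
    qed
    then show ?case using Suc unfolding e1 X_def by (simp add: algebra_simps)
  qed
  obtain k :: nat where k: "B / \<delta> < real k" using reals_Archimedean2 by blast
  have "B < real k * \<delta>" using k dpos by (simp add: divide_less_eq)
  moreover have "0 \<le> Phi (traj X0 (T + 2 * k))" by (rule Phi_nn)
  ultimately show False using dec[of k] by linarith
qed

theorem theorem4p6:
  shows "(\<forall>Xs \<in> (Q_IbM :: (real^('n::{finite,linorder})^('n::{finite,linorder})) set). rank Xs = 1 \<longrightarrow>
            fixed_point f_IbM Xs \<and> locally_stable f_IbM Xs)
       \<and> (\<forall>X0 \<in> (S_rs_symm :: (real^('n::{finite,linorder})^('n::{finite,linorder})) set).
            ((Liminf sequentially (\<lambda>t. ereal (min_abs_entry (traj X0 t))) > 0)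
              \<longleftrightarrow> (\<exists>t0. \<forall>t\<ge>t0. social_balance (traj X0 t)))
          \<and> ((\<exists>t0. \<forall>t\<ge>t0. social_balance (traj X0 t))
              \<longleftrightarrow> (\<exists>Xs \<in> Q_IbM. rank Xs = 1 \<and> traj X0 \<longlonglongrightarrow> Xs)))"
proof (intro conjI)
  show "\<forall>Xs \<in> (Q_IbM :: (real^('n::{finite,linorder})^('n::{finite,linorder})) set). rank Xs = 1 \<longrightarrow>
            fixed_point f_IbM Xs \<and> locally_stable f_IbM Xs"
    using part_i by blast
  show "\<forall>X0 \<in> (S_rs_symm :: (real^('n::{finite,linorder})^('n::{finite,linorder})) set).
            ((Liminf sequentially (\<lambda>t. ereal (min_abs_entry (traj X0 t))) > 0)
              \<longleftrightarrow> (\<exists>t0. \<forall>t\<ge>t0. social_balance (traj X0 t)))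
          \<and> ((\<exists>t0. \<forall>t\<ge>t0. social_balance (traj X0 t))
              \<longleftrightarrow> (\<exists>Xs \<in> Q_IbM. rank Xs = 1 \<and> traj X0 \<longlonglongrightarrow> Xs))"
  proof (intro ballI)
    fix X0 :: "real^('n::{finite,linorder})^('n::{finite,linorder})"
    assume XS: "X0 \<in> S_rs_symm"
    have bc: "(\<exists>t0. \<forall>t\<ge>t0. social_balance (traj X0 t)) \<Longrightarrow> (\<exists>Xs \<in> Q_IbM. rank Xs = 1 \<and> traj X0 \<longlonglongrightarrow> Xs)"
      using bal_to_ac(2) by blast
    have ba: "(\<exists>t0. \<forall>t\<ge>t0. social_balance (traj X0 t)) \<Longrightarrow> Liminf sequentially (\<lambda>t. ereal (min_abs_entry (traj X0 t))) > 0"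
      using bal_to_ac(1) by blast
    have ab: "Liminf sequentially (\<lambda>t. ereal (min_abs_entry (traj X0 t))) > 0 \<Longrightarrow> (\<exists>t0. \<forall>t\<ge>t0. social_balance (traj X0 t))"
      using a_to_b[OF XS] by blast
    have cb: "(\<exists>Xs \<in> Q_IbM. rank Xs = 1 \<and> traj X0 \<longlonglongrightarrow> Xs) \<Longrightarrow> (\<exists>t0. \<forall>t\<ge>t0. social_balance (traj X0 t))"
    proof -
      assume "\<exists>Xs\<in>Q_IbM. rank Xs = 1 \<and> traj X0 \<longlonglongrightarrow> Xs"
      then obtain Xs where "Xs \<in> Q_IbM" "rank Xs = 1" "traj X0 \<longlonglongrightarrow> Xs" by blast
      moreover have "Xs \<in> S_rs_symm" using \<open>Xs \<in> Q_IbM\<close> unfolding Q_IbM_def by blast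
      ultimately show ?thesis using c_to_b by blast
    qed
    show "((Liminf sequentially (\<lambda>t. ereal (min_abs_entry (traj X0 t))) > 0)
              \<longleftrightarrow> (\<exists>t0. \<forall>t\<ge>t0. social_balance (traj X0 t)))
          \<and> ((\<exists>t0. \<forall>t\<ge>t0. social_balance (traj X0 t))
              \<longleftrightarrow> (\<exists>Xs \<in> Q_IbM. rank Xs = 1 \<and> traj X0 \<longlonglongrightarrow> Xs))"
      using ab ba bc cb by blast
  qed
qed


end
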